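(* For $n\ge2$, the family $\mathcal{K}_n$ consists of exactly $2^{\frac{(n-1)(n-2)}{2}}$ Bieberbach groups, and these groups are pairwise nonisomorphic.
   Context: Let $e_1,\dots,e_n$ be the canonical basis of $\mathbb{R}^n$. For $1\le i\le n-1$ let $C_i$ be the diagonal matrix with $-1$ in position $i$ and $1$ elsewhere, and $c_i=\tfrac12e_{i+1}+\sum_{j=1}^{i-1}c_{ji}e_j$ with $c_{ji}\in\{0,\tfrac12\}$. $\mathcal{K}_n$ is the set of subgroups of the Euclidean isometry group $I(\mathbb{R}^n)$ generated by $\{C_iL_{c_i}:1\le i\le n-1\}\cup\{L_{e_j}:1\le j\le n\}$, one for each choice of the parameters $c_{ji}$, $1\le j<i\le n-1$ (here $BL_b$ is $x\mapsto B(x+b)$). A Bieberbach group is a discrete, cocompact, torsion-free subgroup of $I(\mathbb{R}^n)$. *)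

theory Defs
  imports "HOL-Analysis.Analysis" "HOL-Algebra.Generated_Groups"
begin

text \<open>Euclidean space R^n is modelled as real^'n with n = CARD('n); the coordinates
  are labelled 1..n by a bijection ix :: nat => 'n, so that e_i = axis (ix i) 1.\<close>

definition isom_group :: "('n::finite) itself \<Rightarrow> (real^'n \<Rightarrow> real^'n) monoid" where
  "isom_group _ = \<lparr> carrier = {f. bij f \<and> (\<forall>x y. dist (f x) (f y) = dist x y)},
                    mult = (\<lambda>f g. f \<circ> g), one = id \<rparr>"

definition stdbasis :: "(nat \<Rightarrow> 'n::finite) \<Rightarrow> nat \<Rightarrow> real^'n" where
  "stdbasis ix i = axis (ix i) 1"

definition Cvec :: "(nat \<Rightarrow> 'n::finite) \<Rightarrow> (nat \<times> nat \<Rightarrow> real) \<Rightarrow> nat \<Rightarrow> real^'n" where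
  "Cvec ix p i = (1/2) *\<^sub>R stdbasis ix (i+1) + (\<Sum>j\<in>{1..<i}. p (j,i) *\<^sub>R stdbasis ix j)"

definition Cmap :: "(nat \<Rightarrow> 'n::finite) \<Rightarrow> (nat \<times> nat \<Rightarrow> real) \<Rightarrow> nat \<Rightarrow> real^'n \<Rightarrow> real^'n" where
  "Cmap ix p i x = (\<chi> k. if k = ix i then - ((x + Cvec ix p i) $ k) else (x + Cvec ix p i) $ k)"

definition transl :: "real^'n \<Rightarrow> real^'n \<Rightarrow> real^'n" where
  "transl b x = x + b"

definition admissible :: "nat \<Rightarrow> (nat \<times> nat \<Rightarrow> real) \<Rightarrow> bool" where
  "admissible n p \<longleftrightarrow> (\<forall>j i. (1 \<le> j \<and> j < i \<and> i \<le> n - 1 \<longrightarrow> p (j,i) \<in> {0, 1/2})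
                         \<and> (\<not> (1 \<le> j \<and> j < i \<and> i \<le> n - 1) \<longrightarrow> p (j,i) = 0))"

definition Kgens :: "(nat \<Rightarrow> 'n::finite) \<Rightarrow> (nat \<times> nat \<Rightarrow> real) \<Rightarrow> (real^'n \<Rightarrow> real^'n) set" where
  "Kgens ix p = {Cmap ix p i | i. 1 \<le> i \<and> i \<le> CARD('n) - 1}
              \<union> {transl (stdbasis ix j) | j. 1 \<le> j \<and> j \<le> CARD('n)}"

definition Kgroup :: "(nat \<Rightarrow> 'n::finite) \<Rightarrow> (nat \<times> nat \<Rightarrow> real) \<Rightarrow> (real^'n \<Rightarrow> real^'n) monoid" where
  "Kgroup ix p = subgroup_generated (isom_group TYPE('n)) (Kgens ix p)"

definition Kfamily :: "(nat \<Rightarrow> 'n::finite) \<Rightarrow> (real^'n \<Rightarrow> real^'n) set set" where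
  "Kfamily ix = {carrier (Kgroup ix p) | p. admissible CARD('n) p}"

text \<open>Bieberbach: discrete (identity isolated in the compact-open topology of I(R^n)),
  cocompact (a compact set whose translates cover R^n), torsion-free subgroup of I(R^n).\<close>
definition bieberbach :: "(real^'n::finite \<Rightarrow> real^'n) set \<Rightarrow> bool" where
  "bieberbach \<Gamma> \<longleftrightarrow> subgroup \<Gamma> (isom_group TYPE('n))
     \<and> (\<exists>L \<epsilon>. compact L \<and> \<epsilon> > 0 \<and> (\<forall>g\<in>\<Gamma>. (\<forall>x\<in>L. dist (g x) x < \<epsilon>) \<longrightarrow> g = id))
     \<and> (\<exists>K. compact K \<and> (\<Union>g\<in>\<Gamma>. g ` K) = UNIV)
     \<and> (\<forall>g\<in>\<Gamma>. \<forall>k::nat. k \<ge> 1 \<and> (g ^^ k) = id \<longrightarrow> g = id)"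

end

theory Submission
  imports Defs
begin


definition flp :: "'n::finite set \<Rightarrow> real^'n \<Rightarrow> real^'n" where
  "flp F x = (\<chi> k. if k \<in> F then - (x $ k) else x $ k)"

definition affm :: "'n::finite set \<Rightarrow> real^'n \<Rightarrow> real^'n \<Rightarrow> real^'n" where
  "affm F v = (\<lambda>x. flp F x + v)"

definition Zv :: "(real^'n::finite) set" where
  "Zv = {v. \<forall>k. v $ k \<in> \<int>}"

lemma flp_nth [simp]: "flp F x $ k = (if k \<in> F then - (x $ k) else x $ k)"
  by (simp add: flp_def)

lemma flp_flp [simp]: "flp F (flp F x) = x"
  by (simp add: vec_eq_iff)

lemma flp_add: "flp F (x + y) = flp F x + flp F y"
  by (simp add: vec_eq_iff)

lemma flp_diff: "flp F (x - y) = flp F x - flp F y"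
  by (simp add: vec_eq_iff)

lemma flp_uminus: "flp F (- x) = - flp F x"
  by (simp add: vec_eq_iff)

lemma flp_scaleR: "flp F (c *\<^sub>R x) = c *\<^sub>R flp F x"
  by (simp add: vec_eq_iff)

lemma flp_zero [simp]: "flp F 0 = 0"
  by (simp add: vec_eq_iff)

lemma flp_empty [simp]: "flp {} x = x"
  by (simp add: vec_eq_iff)

lemma norm_flp [simp]: "norm (flp F x) = norm x"
  unfolding norm_vec_def by (rule arg_cong[where f="\<lambda>f. L2_set f UNIV"]) auto

lemma affm_apply: "affm F v x = flp F x + v"
  by (simp add: affm_def)

lemma affm_comp: "affm F v \<circ> affm G w = affm ((F - G) \<union> (G - F)) (flp F w + v)"
  by (auto simp: affm_def vec_eq_iff)

lemma affm_id: "affm {} 0 = id"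
  by (auto simp: affm_def)

lemma affm_transl: "transl u = affm {} u"
  by (auto simp: affm_def transl_def)

lemma affm_inj:
  assumes "affm F v = affm G w" shows "F = G \<and> v = w"
proof -
  have "affm F v 0 = affm G w 0" using assms by simp
  then have v: "v = w" by (simp add: affm_def)
  have "k \<in> F \<longleftrightarrow> k \<in> G" for k
  proof -
    have "affm F v (axis k 1) $ k = affm G w (axis k 1) $ k" using assms by simp
    then show ?thesis using v by (auto simp: affm_def axis_def split: if_splits)
  qed
  with v show ?thesis by auto
qed

lemma affm_dist: "dist (affm F v x) (affm F v y) = dist x y"
  by (simp add: affm_def dist_norm flp_diff[symmetric])

lemma affm_inv: "affm F v \<circ> affm F (- flp F v) = id" "affm F (- flp F v) \<circ> affm F v = id"
  by (auto simp: affm_def vec_eq_iff)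

lemma affm_bij: "bij (affm F v)"
  using affm_inv by (metis o_bij)

lemma affm_carrier: "affm F v \<in> carrier (isom_group TYPE('n::finite))"
  by (simp add: isom_group_def affm_bij affm_dist)

lemma isom_group_group: "group (isom_group TYPE('n::finite))"
proof (rule groupI)
  show "x \<otimes>\<^bsub>isom_group TYPE('n)\<^esub> y \<in> carrier (isom_group TYPE('n))"
    if "x \<in> carrier (isom_group TYPE('n))" "y \<in> carrier (isom_group TYPE('n))" for x y
    using that by (auto simp: isom_group_def bij_comp)
  show "\<one>\<^bsub>isom_group TYPE('n)\<^esub> \<in> carrier (isom_group TYPE('n))"
    by (simp add: isom_group_def)
  show "x \<otimes>\<^bsub>isom_group TYPE('n)\<^esub> y \<otimes>\<^bsub>isom_group TYPE('n)\<^esub> z =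
        x \<otimes>\<^bsub>isom_group TYPE('n)\<^esub> (y \<otimes>\<^bsub>isom_group TYPE('n)\<^esub> z)" for x y z
    by (simp add: isom_group_def comp_assoc)
  show "\<one>\<^bsub>isom_group TYPE('n)\<^esub> \<otimes>\<^bsub>isom_group TYPE('n)\<^esub> x = x" for x
    by (simp add: isom_group_def)
  show "\<exists>y\<in>carrier (isom_group TYPE('n)). y \<otimes>\<^bsub>isom_group TYPE('n)\<^esub> x = \<one>\<^bsub>isom_group TYPE('n)\<^esub>"
    if "x \<in> carrier (isom_group TYPE('n))" for x
  proof -
    have b: "bij x" and d: "\<forall>a b. dist (x a) (x b) = dist a b" using that by (auto simp: isom_group_def)
    have "dist (inv_into UNIV x a) (inv_into UNIV x b) = dist a b" for a b
      using d[rule_format, of "inv_into UNIV x a" "inv_into UNIV x b"] b by (metis bij_is_surj surj_f_inv_f)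
    moreover have "inv_into UNIV x \<circ> x = id" using b by (simp add: bij_is_inj)
    moreover have "bij (inv_into UNIV x)" using b by (simp add: bij_imp_bij_inv)
    ultimately show ?thesis by (auto simp: isom_group_def intro!: bexI[of _ "inv_into UNIV x"])
  qed
qed



lemma axis_nth1 [simp]: "axis k (1::real) $ j = (if j = k then 1 else 0)"
  by (simp add: axis_def)

lemma Zv_iff: "v \<in> Zv \<longleftrightarrow> (\<forall>k. v $ k \<in> \<int>)" by (simp add: Zv_def)
lemma Zv_add [intro]: "u \<in> Zv \<Longrightarrow> v \<in> Zv \<Longrightarrow> u + v \<in> Zv" by (simp add: Zv_def)
lemma Zv_diff [intro]: "u \<in> Zv \<Longrightarrow> v \<in> Zv \<Longrightarrow> u - v \<in> Zv" by (simp add: Zv_def)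
lemma Zv_uminus [intro]: "u \<in> Zv \<Longrightarrow> - u \<in> Zv" by (simp add: Zv_def)
lemma Zv_zero [intro, simp]: "0 \<in> Zv" by (simp add: Zv_def)
lemma Zv_flp [intro]: "u \<in> Zv \<Longrightarrow> flp F u \<in> Zv"
  unfolding Zv_def flp_nth mem_Collect_eq by (metis Ints_minus)
lemma Zv_axis [intro, simp]: "axis k 1 \<in> Zv"
  unfolding Zv_def axis_nth1 mem_Collect_eq by (metis Ints_0 Ints_1)
lemma Zv_scale [intro]: "c \<in> \<int> \<Longrightarrow> u \<in> Zv \<Longrightarrow> c *\<^sub>R u \<in> Zv"
  unfolding Zv_def by (simp add: Ints_mult)
lemma Zv_sum [intro]: "(\<And>i. i \<in> S \<Longrightarrow> f i \<in> Zv) \<Longrightarrow> sum f S \<in> Zv"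
  by (auto simp: Zv_def intro!: Ints_sum)

lemma flp_minus_self_Zv: "2 *\<^sub>R w \<in> Zv \<Longrightarrow> flp F w - w \<in> Zv"
proof -
  assume a: "2 *\<^sub>R w \<in> Zv"
  have "flp F w - w = (- 1) *\<^sub>R (\<chi> k. if k \<in> F then (2 *\<^sub>R w) $ k else 0)"
    by (simp add: vec_eq_iff)
  also have "\<dots> \<in> Zv"
  proof (rule Zv_scale)
    show "(\<chi> k. if k \<in> F then (2 *\<^sub>R w) $ k else 0) \<in> Zv"
      using a unfolding Zv_def mem_Collect_eq vec_lambda_beta by (metis Ints_0)
  qed simp
  finally show ?thesis .
qed

lemma flp_plus_self: "flp F w + w = (\<chi> k. if k \<in> F then 0 else 2 * w $ k)"
  by (simp add: vec_eq_iff)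

definition Wv :: "(nat \<Rightarrow> 'n::finite) \<Rightarrow> (nat \<times> nat \<Rightarrow> real) \<Rightarrow> nat set \<Rightarrow> real^'n" where
  "Wv ix p I = (\<Sum>i\<in>I. Cvec ix p i)"

definition Gp :: "(nat \<Rightarrow> 'n::finite) \<Rightarrow> (nat \<times> nat \<Rightarrow> real) \<Rightarrow> (real^'n \<Rightarrow> real^'n) set" where
  "Gp ix p = {affm (ix ` I) v | I v. I \<subseteq> {1..CARD('n) - 1} \<and> v - Wv ix p I \<in> Zv}"

lemma adm_vals: "admissible n p \<Longrightarrow> p (j,i) \<in> {0, 1/2}"
  unfolding admissible_def by (cases "1 \<le> j \<and> j < i \<and> i \<le> n - 1") auto

lemma adm_2Z: "admissible n p \<Longrightarrow> 2 * p (j,i) \<in> \<int>"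
proof -
  assume "admissible n p"
  then have "p (j,i) = 0 \<or> p (j,i) = 1/2" using adm_vals[of n p j i] by auto
  then have "2 * p (j,i) = 0 \<or> 2 * p (j,i) = 1" by auto
  then show ?thesis by (metis Ints_0 Ints_1)
qed

locale KS0 =
  fixes ix :: "nat \<Rightarrow> 'n::finite"
  assumes N2: "CARD('n) \<ge> 2"
    and bij: "bij_betw ix {1..CARD('n)} UNIV"
begin


lemma sub_N: "I \<subseteq> {1..CARD('n)-1} \<Longrightarrow> I \<subseteq> {1..CARD('n)}"
  by (erule order_trans) auto

lemma ix_inj: "inj_on ix {1..CARD('n)}" using bij by (simp add: bij_betw_def)
lemma ix_surj: "ix ` {1..CARD('n)} = UNIV" using bij by (simp add: bij_betw_def)

lemma ix_eq: "i \<in> {1..CARD('n)} \<Longrightarrow> j \<in> {1..CARD('n)} \<Longrightarrow> ix i = ix j \<longleftrightarrow> i = j"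
  using ix_inj by (meson inj_on_eq_iff)

lemma ix_cases: obtains m where "m \<in> {1..CARD('n)}" "k = ix m"
  using ix_surj by (metis UNIV_I imageE)

lemma stdbasis_nth: "i \<in> {1..CARD('n)} \<Longrightarrow> m \<in> {1..CARD('n)} \<Longrightarrow> stdbasis ix i $ ix m = (if m = i then 1 else 0)"
  using ix_eq by (auto simp: stdbasis_def)

lemma Cvec_nth:
  assumes i: "i \<in> {1..CARD('n)-1}" and m: "m \<in> {1..CARD('n)}"
  shows "Cvec ix p i $ ix m = (if m = i + 1 then 1/2 else 0) + (if m < i then p (m,i) else 0)"
proof -
  have i1: "i + 1 \<in> {1..CARD('n)}" using i by auto
  have "(\<Sum>j\<in>{1..<i}. p (j,i) * stdbasis ix j $ ix m) = (\<Sum>j\<in>{1..<i}. if j = m then p (m,i) else 0)"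
    using i m by (intro sum.cong) (auto simp: stdbasis_nth)
  also have "\<dots> = (if m < i then p (m,i) else 0)" using m by (simp add: sum.delta)
  finally show ?thesis using stdbasis_nth[OF i1 m] by (auto simp: Cvec_def)
qed

lemma Cvec_nth_self: "i \<in> {1..CARD('n)-1} \<Longrightarrow> Cvec ix p i $ ix i = 0"
  using Cvec_nth[of i i] by auto

lemma Cvec_2Z: "admissible CARD('n) p \<Longrightarrow> i \<in> {1..CARD('n)-1} \<Longrightarrow> 2 *\<^sub>R Cvec ix p i \<in> Zv"
proof -
  assume a: "admissible CARD('n) p" and i: "i \<in> {1..CARD('n)-1}"
  have "(2 *\<^sub>R Cvec ix p i) $ k \<in> \<int>" for k
  proof -
    obtain m where m: "m \<in> {1..CARD('n)}" "k = ix m" by (rule ix_cases)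
    show ?thesis using Cvec_nth[OF i m(1), of p] adm_2Z[OF a, of m i] m(2)
      by (auto simp: distrib_left)
  qed
  then show ?thesis by (simp add: Zv_def)
qed

lemma Wv_2Z: "admissible CARD('n) p \<Longrightarrow> I \<subseteq> {1..CARD('n)-1} \<Longrightarrow> 2 *\<^sub>R Wv ix p I \<in> Zv"
  unfolding Wv_def scaleR_sum_right using Cvec_2Z by blast

lemma Wv_empty [simp]: "Wv ix p {} = 0" by (simp add: Wv_def)

lemma Wv_symdiff:
  assumes "I \<subseteq> {1..CARD('n)-1}" "J \<subseteq> {1..CARD('n)-1}"
  shows "Wv ix p I + Wv ix p J = Wv ix p ((I - J) \<union> (J - I)) + 2 *\<^sub>R Wv ix p (I \<inter> J)"
proof -
  have f: "finite I" "finite J" using assms(1) apply (rule finite_subset) apply simp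
    using assms(2) apply (rule finite_subset) apply simp done
  have "Wv ix p I = Wv ix p (I \<inter> J) + Wv ix p (I - J)" unfolding Wv_def by (rule sum.Int_Diff[OF f(1)])
  moreover have "Wv ix p J = Wv ix p (J \<inter> I) + Wv ix p (J - I)" unfolding Wv_def by (rule sum.Int_Diff[OF f(2)])
  moreover have "Wv ix p ((I - J) \<union> (J - I)) = Wv ix p (I - J) + Wv ix p (J - I)"
    unfolding Wv_def using f by (intro sum.union_disjoint) auto
  ultimately show ?thesis by (simp add: Int_commute scaleR_2)
qed

lemma image_symdiff:
  assumes "I \<subseteq> {1..CARD('n)-1}" "J \<subseteq> {1..CARD('n)-1}"
  shows "(ix ` I - ix ` J) \<union> (ix ` J - ix ` I) = ix ` ((I - J) \<union> (J - I))"
proof -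
  have "I \<subseteq> {1..CARD('n)}" "J \<subseteq> {1..CARD('n)}" using assms by (meson sub_N)+
  then have a: "ix ` (I - J) = ix ` I - ix ` J" and b: "ix ` (J - I) = ix ` J - ix ` I"
    using inj_on_image_set_diff[OF ix_inj] by blast+
  show ?thesis unfolding image_Un a b ..
qed

lemma Cmap_affm: assumes i: "i \<in> {1..CARD('n)-1}" shows "Cmap ix p i = affm {ix i} (Cvec ix p i)"
proof (rule ext)
  fix x
  have c: "Cvec ix p i $ ix i = 0" using Cvec_nth_self[OF i] .
  show "Cmap ix p i x = affm {ix i} (Cvec ix p i) x"
    unfolding Cmap_def affm_apply vec_eq_iff
  proof
    fix k show "(\<chi> k. if k = ix i then - ((x + Cvec ix p i) $ k) else (x + Cvec ix p i) $ k) $ k =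
      (flp {ix i} x + Cvec ix p i) $ k"
      using c by (cases "k = ix i") simp_all
  qed
qed

lemma GpI: "I \<subseteq> {1..CARD('n)-1} \<Longrightarrow> v - Wv ix p I \<in> Zv \<Longrightarrow> affm (ix ` I) v \<in> Gp ix p"
  unfolding Gp_def by blast

lemma GpE: assumes "g \<in> Gp ix p"
  obtains I v where "g = affm (ix ` I) v" "I \<subseteq> {1..CARD('n)-1}" "v - Wv ix p I \<in> Zv"
  using assms unfolding Gp_def by blast

lemma Gp_carrier: "Gp ix p \<subseteq> carrier (isom_group TYPE('n))"
  unfolding Gp_def using affm_carrier by blast

lemma Gp_mult:
  assumes a: "admissible CARD('n) p" and g: "g \<in> Gp ix p" and h: "h \<in> Gp ix p"
  shows "g \<circ> h \<in> Gp ix p"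
proof -
  obtain I v where g': "g = affm (ix ` I) v" "I \<subseteq> {1..CARD('n)-1}" "v - Wv ix p I \<in> Zv"
    using g by (auto simp: Gp_def)
  obtain J w where h': "h = affm (ix ` J) w" "J \<subseteq> {1..CARD('n)-1}" "w - Wv ix p J \<in> Zv"
    using h by (auto simp: Gp_def)
  have 2: "2 *\<^sub>R w \<in> Zv"
  proof -
    have "2 *\<^sub>R w = 2 *\<^sub>R (w - Wv ix p J) + 2 *\<^sub>R Wv ix p J" by (simp add: algebra_simps)
    then show ?thesis using h' Wv_2Z[OF a h'(2)] by (metis Ints_numeral Zv_add Zv_scale)
  qed
  have "flp (ix ` I) w + v - Wv ix p ((I - J) \<union> (J - I)) =
        (flp (ix ` I) w - w) + (w - Wv ix p J) + (v - Wv ix p I) + 2 *\<^sub>R Wv ix p (I \<inter> J)"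
    using Wv_symdiff[OF g'(2) h'(2), of p] by (simp add: algebra_simps)
  also have "\<dots> \<in> Zv"
    using flp_minus_self_Zv[OF 2] g' h' Wv_2Z[OF a, of "I \<inter> J"] by blast
  finally have "flp (ix ` I) w + v - Wv ix p ((I - J) \<union> (J - I)) \<in> Zv" .
  moreover have "g \<circ> h = affm (ix ` ((I - J) \<union> (J - I))) (flp (ix ` I) w + v)"
    using g' h' by (simp add: affm_comp image_symdiff)
  ultimately show ?thesis using g'(2) h'(2) by (auto simp: Gp_def)
qed

lemma isom_inv_affm: "inv\<^bsub>isom_group TYPE('n)\<^esub> (affm F v) = affm F (- flp F v)"
proof (rule group.inv_equality[OF isom_group_group])
  show "affm F (- flp F v) \<otimes>\<^bsub>isom_group TYPE('n)\<^esub> affm F v = \<one>\<^bsub>isom_group TYPE('n)\<^esub>"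
    using affm_inv(2)[of F v] by (simp add: isom_group_def)
qed (rule affm_carrier)+

lemma Gp_inv:
  assumes a: "admissible CARD('n) p" and g: "g \<in> Gp ix p"
  shows "inv\<^bsub>isom_group TYPE('n)\<^esub> g \<in> Gp ix p"
proof -
  obtain I v where g': "g = affm (ix ` I) v" "I \<subseteq> {1..CARD('n)-1}" "v - Wv ix p I \<in> Zv"
    using g by (auto simp: Gp_def)
  have 2: "2 *\<^sub>R v \<in> Zv"
  proof -
    have "2 *\<^sub>R v = 2 *\<^sub>R (v - Wv ix p I) + 2 *\<^sub>R Wv ix p I" by (simp add: algebra_simps)
    then show ?thesis using g' Wv_2Z[OF a g'(2)] by (metis Ints_numeral Zv_add Zv_scale)
  qed
  have "- flp (ix ` I) v - Wv ix p I = - (flp (ix ` I) v - v) - (v - Wv ix p I) - 2 *\<^sub>R Wv ix p I"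
    by (simp add: algebra_simps scaleR_2)
  also have "\<dots> \<in> Zv" using flp_minus_self_Zv[OF 2] g' Wv_2Z[OF a g'(2)] by blast
  finally show ?thesis using g' GpI by (simp add: isom_inv_affm)
qed

lemma Gp_subgroup: "admissible CARD('n) p \<Longrightarrow> subgroup (Gp ix p) (isom_group TYPE('n))"
proof (rule group.subgroupI[OF isom_group_group])
  assume a: "admissible CARD('n) p"
  show "Gp ix p \<subseteq> carrier (isom_group TYPE('n))" by (rule Gp_carrier)
  have "affm (ix ` {}) 0 \<in> Gp ix p" by (rule GpI) auto
  then show "Gp ix p \<noteq> {}" by blast
  show "inv\<^bsub>isom_group TYPE('n)\<^esub> g \<in> Gp ix p" if "g \<in> Gp ix p" for g using Gp_inv[OF a that] .
  show "g \<otimes>\<^bsub>isom_group TYPE('n)\<^esub> h \<in> Gp ix p" if "g \<in> Gp ix p" "h \<in> Gp ix p" for g h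
    using Gp_mult[OF a that] by (simp add: isom_group_def)
qed

end


context KS0 begin

lemma Wv_single: "Wv ix p {i} = Cvec ix p i" by (simp add: Wv_def)

lemma Kgens_sub: "admissible CARD('n) p \<Longrightarrow> Kgens ix p \<subseteq> Gp ix p"
proof
  fix g assume a: "admissible CARD('n) p" and g: "g \<in> Kgens ix p"
  show "g \<in> Gp ix p"
  proof (cases "\<exists>i. g = Cmap ix p i \<and> 1 \<le> i \<and> i \<le> CARD('n) - 1")
    case True
    then obtain i where i: "g = Cmap ix p i" "i \<in> {1..CARD('n)-1}" by auto
    have "affm (ix ` {i}) (Cvec ix p i) \<in> Gp ix p" by (rule GpI) (use i in \<open>auto simp: Wv_single\<close>)
    then show ?thesis using i Cmap_affm by simp
  next
    case False
    then obtain j where j: "g = transl (stdbasis ix j)" using g by (auto simp: Kgens_def)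
    have "affm (ix ` {}) (stdbasis ix j) \<in> Gp ix p" by (rule GpI) (auto simp: stdbasis_def)
    then show ?thesis using j by (simp add: affm_transl)
  qed
qed

lemma Kgens_carrier: "admissible CARD('n) p \<Longrightarrow> Kgens ix p \<subseteq> carrier (isom_group TYPE('n))"
  using Kgens_sub Gp_carrier by blast

lemma Kcarrier_sub: "admissible CARD('n) p \<Longrightarrow> carrier (Kgroup ix p) \<subseteq> Gp ix p"
  unfolding Kgroup_def
  by (rule group.subgroup_generated_minimal[OF isom_group_group Gp_subgroup Kgens_sub])

lemma transl_comp: "transl a \<circ> transl b = transl (a + b)"
  by (auto simp: transl_def)

lemma sum_axis: "(\<Sum>k\<in>UNIV. (u $ k) *\<^sub>R axis k (1::real)) = (u :: real^'n)"
  by (simp add: vec_eq_iff if_distrib cong: if_cong)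

lemma Kcarrier_eq:
  assumes a: "admissible CARD('n) p"
  shows "carrier (Kgroup ix p) = Gp ix p"
proof
  show "carrier (Kgroup ix p) \<subseteq> Gp ix p" using Kcarrier_sub[OF a] .
  let ?G = "isom_group TYPE('n)"
  let ?H = "carrier (Kgroup ix p)"
  have sg: "subgroup ?H ?G" unfolding Kgroup_def by (rule group.subgroup_subgroup_generated[OF isom_group_group])
  have gens: "Kgens ix p \<subseteq> ?H" unfolding Kgroup_def
    by (rule group.subgroup_generated_subset_carrier_subset[OF isom_group_group Kgens_carrier[OF a]])
  have mult: "f \<circ> g \<in> ?H" if "f \<in> ?H" "g \<in> ?H" for f g
    using subgroup.m_closed[OF sg that] by (simp add: isom_group_def)
  have one: "id \<in> ?H" using subgroup.one_closed[OF sg] by (simp add: isom_group_def)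
  have tinv: "transl (- a) \<in> ?H" if "transl a \<in> ?H" for a
    using subgroup.m_inv_closed[OF sg that] by (simp add: affm_transl isom_inv_affm)
  have tax: "transl (axis k 1) \<in> ?H" for k
  proof -
    obtain m where m: "m \<in> {1..CARD('n)}" "k = ix m" by (rule ix_cases)
    have "transl (stdbasis ix m) \<in> Kgens ix p" using m by (auto simp: Kgens_def)
    then show ?thesis using gens m by (auto simp: stdbasis_def)
  qed
  have tnat: "transl (of_nat n *\<^sub>R a) \<in> ?H" if "transl a \<in> ?H" for a n
  proof (induction n)
    case 0 then show ?case using one by (simp add: transl_def id_def)
  next
    case (Suc n)
    have "transl (of_nat (Suc n) *\<^sub>R a) = transl (of_nat n *\<^sub>R a) \<circ> transl a"
      by (simp add: transl_comp algebra_simps)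
    then show ?case using mult[OF Suc that] by metis
  qed
  have tint: "transl (c *\<^sub>R a) \<in> ?H" if ta: "transl a \<in> ?H" and cZ: "c \<in> \<int>" for a c
  proof -
    obtain z where z: "c = of_int z" using cZ by (auto elim: Ints_cases)
    show ?thesis
    proof (cases "z \<ge> 0")
      case True
      then have "c = of_nat (nat z)" using z by simp
      then show ?thesis using tnat[OF ta] by simp
    next
      case False
      then have "c = - of_nat (nat (- z))" using z by simp
      then show ?thesis using tinv[OF tnat[OF ta, of "nat (-z)"]] by simp
    qed
  qed
  have tsum: "transl (\<Sum>k\<in>S. (u $ k) *\<^sub>R axis k 1) \<in> ?H" if "u \<in> Zv" "finite S" for u S
    using that(2)
  proof (induction S rule: finite_induct)
    case empty then show ?case using one by (simp add: transl_def id_def)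
  next
    case (insert k S)
    have eq: "transl (\<Sum>k\<in>insert k S. (u $ k) *\<^sub>R axis k 1) = transl ((u $ k) *\<^sub>R axis k 1) \<circ> transl (\<Sum>k\<in>S. (u $ k) *\<^sub>R axis k 1)"
      using insert by (simp add: transl_comp)
    have "transl ((u $ k) *\<^sub>R axis k 1) \<in> ?H" using tint[OF tax] that(1) by (simp add: Zv_def)
    then show ?case unfolding eq using insert.IH by (rule mult)
  qed
  have tZ: "transl u \<in> ?H" if "u \<in> Zv" for u
    using tsum[OF that, of UNIV] by (simp add: sum_axis)
  have ex: "\<exists>v. affm (ix ` I) v \<in> ?H" if "finite I" "I \<subseteq> {1..CARD('n)-1}" for I
    using that
  proof (induction I rule: finite_induct)
    case empty then show ?case using one affm_id by (metis image_empty)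
  next
    case (insert i I)
    then obtain v where v: "affm (ix ` I) v \<in> ?H" by auto
    have i: "i \<in> {1..CARD('n)-1}" using insert by auto
    have "Cmap ix p i \<in> Kgens ix p" using i by (auto simp: Kgens_def)
    then have c: "affm {ix i} (Cvec ix p i) \<in> ?H" using gens Cmap_affm[OF i] by auto
    have nin: "ix i \<notin> ix ` I"
    proof
      assume "ix i \<in> ix ` I"
      then obtain j where "j \<in> I" "ix i = ix j" by auto
      moreover have Is: "insert i I \<subseteq> {1..CARD('n)}" using insert.prems by (rule sub_N)
      moreover have "j \<in> {1..CARD('n)}" "i \<in> {1..CARD('n)}" using Is \<open>j \<in> I\<close> by blast+
      ultimately show False using ix_eq insert by metis
    qed
    have "affm {ix i} (Cvec ix p i) \<circ> affm (ix ` I) v = affm (ix ` insert i I) (flp {ix i} v + Cvec ix p i)"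
      using nin by (simp add: affm_comp insert_Diff_if Un_commute insert_is_Un[symmetric])
    then show ?case using mult[OF c v] by metis
  qed
  show "Gp ix p \<subseteq> ?H"
  proof
    fix g assume "g \<in> Gp ix p"
    then obtain I v where g: "g = affm (ix ` I) v" "I \<subseteq> {1..CARD('n)-1}" "v - Wv ix p I \<in> Zv"
      by (rule GpE)
    have fI: "finite I" using g(2) by (rule finite_subset) simp
    obtain v' where v': "affm (ix ` I) v' \<in> ?H" using ex[OF fI g(2)] by auto
    then have "affm (ix ` I) v' \<in> Gp ix p" using Kcarrier_sub[OF a] by auto
    then obtain J w where J: "affm (ix ` I) v' = affm (ix ` J) w" "J \<subseteq> {1..CARD('n)-1}" "w - Wv ix p J \<in> Zv"
      by (rule GpE)
    have "ix ` I = ix ` J" "v' = w" using affm_inj[OF J(1)] by auto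
    moreover have "I \<subseteq> {1..CARD('n)}" "J \<subseteq> {1..CARD('n)}" using g(2) J(2) by (meson sub_N)+
    ultimately have IJ: "I = J" using inj_on_image_eq_iff[OF ix_inj] by metis
    have "v - v' = (v - Wv ix p I) - (w - Wv ix p J)" using IJ \<open>v' = w\<close> by simp
    then have z: "v - v' \<in> Zv" using Zv_diff[OF g(3) J(3)] by metis
    have "g = affm (ix ` I) v' \<circ> transl (flp (ix ` I) (v - v'))"
      using g(1) by (simp add: affm_transl affm_comp)
    moreover have "transl (flp (ix ` I) (v - v')) \<in> ?H" using tZ z by auto
    ultimately show "g \<in> ?H" using mult v' by simp
  qed
qed

end


lemma half_not_Int: "(x::real) \<in> \<int> \<Longrightarrow> x \<noteq> 1/2"
proof
  assume "x \<in> \<int>" "x = 1/2"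
  then obtain z where "of_int z = (1/2::real)" by (auto elim: Ints_cases)
  then have "real_of_int (2 * z) = 1" by simp
  then have "2 * z = 1" by linarith
  then show False by presburger
qed

lemma affm_pow_nth: "c \<notin> F \<Longrightarrow> ((affm F v ^^ k) x) $ c = x $ c + real k * v $ c"
  by (induction k) (auto simp: affm_def algebra_simps)

context KS0 begin

lemma Gp_2v: "admissible CARD('n) p \<Longrightarrow> I \<subseteq> {1..CARD('n)-1} \<Longrightarrow> v - Wv ix p I \<in> Zv \<Longrightarrow> 2 *\<^sub>R v \<in> Zv"
proof -
  assume a: "admissible CARD('n) p" and I: "I \<subseteq> {1..CARD('n)-1}" and v: "v - Wv ix p I \<in> Zv"
  have "2 *\<^sub>R v = 2 *\<^sub>R (v - Wv ix p I) + 2 *\<^sub>R Wv ix p I" by (simp add: algebra_simps)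
  then show ?thesis using v Wv_2Z[OF a I] by (metis Ints_numeral Zv_add Zv_scale)
qed

lemma Wv_top_nth:
  assumes I: "I \<subseteq> {1..CARD('n)-1}" and fin: "finite I" and ne: "I \<noteq> {}"
  shows "Wv ix p I $ ix (Max I + 1) = 1/2"
proof -
  let ?i = "Max I"
  have iI: "?i \<in> I" using fin ne by simp
  have "?i \<in> {1..CARD('n)-1}" using iI I by blast
  then have m: "?i + 1 \<in> {1..CARD('n)}" using N2 by auto
  have "Wv ix p I $ ix (?i + 1) = (\<Sum>j\<in>I. Cvec ix p j $ ix (?i + 1))" by (simp add: Wv_def)
  also have "\<dots> = (\<Sum>j\<in>I. if j = ?i then 1/2 else 0)"
  proof (rule sum.cong)
    fix j assume j: "j \<in> I"
    have "j \<le> ?i" using fin j by simp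
    moreover have "j \<in> {1..CARD('n)-1}" using j I by blast
    ultimately show "Cvec ix p j $ ix (?i + 1) = (if j = ?i then 1/2 else 0)"
      using Cvec_nth[of j "?i + 1" p] m by auto
  qed simp
  also have "\<dots> = 1/2" using iI fin by (simp add: sum.delta)
  finally show ?thesis .
qed

lemma Gp_bieberbach:
  assumes a: "admissible CARD('n) p"
  shows "bieberbach (carrier (Kgroup ix p))"
  unfolding bieberbach_def
proof (intro conjI)
  let ?G = "carrier (Kgroup ix p)"
  have eq: "?G = Gp ix p" by (rule Kcarrier_eq[OF a])
  show "subgroup ?G (isom_group TYPE('n))" unfolding Kgroup_def
    by (rule group.subgroup_subgroup_generated[OF isom_group_group])
  show "\<exists>L \<epsilon>. compact L \<and> \<epsilon> > 0 \<and> (\<forall>g\<in>?G. (\<forall>x\<in>L. dist (g x) x < \<epsilon>) \<longrightarrow> g = id)"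
  proof (intro exI conjI ballI impI)
    let ?L = "insert 0 (range (\<lambda>k. axis k (1::real))) :: (real^'n) set"
    show "compact ?L" by (rule finite_imp_compact) simp
    show "(1/2::real) > 0" by simp
    fix g assume g: "g \<in> ?G" and d: "\<forall>x\<in>?L. dist (g x) x < 1/2"
    obtain I v where g': "g = affm (ix ` I) v" "I \<subseteq> {1..CARD('n)-1}" "v - Wv ix p I \<in> Zv"
      using g eq by (auto elim: GpE)
    have 2: "2 *\<^sub>R v \<in> Zv" by (rule Gp_2v[OF a g'(2,3)])
    have "dist (g 0) 0 < 1/2" using d by simp
    then have nv: "norm v < 1/2" using g' by (simp add: affm_def dist_norm)
    have v0: "v $ k = 0" for k
    proof -
      have "\<bar>v $ k\<bar> < 1/2" using component_le_norm_cart[of v k] nv by linarith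
      then have "\<bar>(2 *\<^sub>R v) $ k\<bar> < 1" by simp
      moreover have "(2 *\<^sub>R v) $ k \<in> \<int>" using 2 unfolding Zv_def by blast
      ultimately have "(2 *\<^sub>R v) $ k = 0" using Ints_nonzero_abs_less1 by blast
      then show ?thesis by simp
    qed
    then have "v = 0" by (simp add: vec_eq_iff)
    have F: "ix ` I = {}"
    proof (rule ccontr)
      assume "ix ` I \<noteq> {}"
      then obtain k where k: "k \<in> ix ` I" by blast
      have "dist (g (axis k 1)) (axis k 1) < 1/2" using d by simp
      moreover have "\<bar>(g (axis k 1) - axis k 1) $ k\<bar> = 2" using k g' \<open>v = 0\<close> by (simp add: affm_def)
      ultimately show False using component_le_norm_cart[of "g (axis k 1) - axis k 1" k]
        by (simp add: dist_norm)
    qed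
    show "g = id" using g' F \<open>v = 0\<close> affm_id by simp
  qed
  show "\<exists>K. compact K \<and> (\<Union>g\<in>?G. g ` K) = UNIV"
  proof (intro exI conjI)
    let ?K = "cbox (0::real^'n) 1"
    show "compact ?K" by (rule compact_cbox)
    show "(\<Union>g\<in>?G. g ` ?K) = UNIV"
    proof -
     have "y \<in> (\<Union>g\<in>?G. g ` ?K)" for y :: "real^'n"
     proof -
      let ?u = "(\<chi> k. of_int \<lfloor>y $ k\<rfloor>) :: real^'n"
      have uZ: "?u \<in> Zv" by (simp add: Zv_def)
      have "affm (ix ` {}) ?u \<in> Gp ix p" by (rule GpI) (use uZ in auto)
      then have t: "transl ?u \<in> ?G" using eq by (simp add: affm_transl)
      have "y - ?u \<in> ?K" by (simp add: mem_box_cart) linarith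
      moreover have "transl ?u (y - ?u) = y" by (simp add: transl_def)
      ultimately show "y \<in> (\<Union>g\<in>?G. g ` ?K)" using t by (metis UN_I imageI)
     qed
     then show ?thesis by auto
    qed
  qed
  show "\<forall>g\<in>?G. \<forall>k::nat. k \<ge> 1 \<and> (g ^^ k) = id \<longrightarrow> g = id"
  proof (intro ballI allI impI)
    fix g k assume g: "g \<in> ?G" and k: "(k::nat) \<ge> 1 \<and> (g ^^ k) = id"
    obtain I v where g': "g = affm (ix ` I) v" "I \<subseteq> {1..CARD('n)-1}" "v - Wv ix p I \<in> Zv"
      using g eq by (auto elim: GpE)
    have fin: "finite I" using g'(2) by (rule finite_subset) simp
    show "g = id"
    proof (cases "I = {}")
      case True
      have "v $ c = 0" for c
      proof -
        have "((g ^^ k) 0) $ c = real k * v $ c" using affm_pow_nth[where c=c and F="ix ` I" and v=v and k=k and x=0] g' True by simp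
        then show ?thesis using k by simp
      qed
      then have "v = 0" by (simp add: vec_eq_iff)
      then show ?thesis using g' True affm_id by simp
    next
      case False
      let ?i = "Max I"
      have iI: "?i \<in> I" using fin False by simp
      have "?i \<in> {1..CARD('n)-1}" using iI g'(2) by blast
      then have m: "?i + 1 \<in> {1..CARD('n)}" using N2 by auto
      have Isub: "I \<subseteq> {1..CARD('n)}" using g'(2) by (rule sub_N)
      have c: "ix (?i + 1) \<notin> ix ` I"
      proof
        assume "ix (?i + 1) \<in> ix ` I"
        then obtain j where j: "j \<in> I" "ix (?i + 1) = ix j" by auto
        then have "?i + 1 = j" using ix_eq[OF m] Isub by blast
        moreover have "j \<le> ?i" using fin j by simp
        ultimately show False by simp
      qed
      have w: "Wv ix p I $ ix (?i + 1) = 1/2" by (rule Wv_top_nth[OF g'(2) fin False])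
      have "(v - Wv ix p I) $ ix (?i + 1) \<in> \<int>" using g'(3) unfolding Zv_def by blast
      then have vi: "v $ ix (?i + 1) - 1/2 \<in> \<int>" unfolding vector_minus_component w .
      have nz: "v $ ix (?i + 1) \<noteq> 0"
      proof
        assume "v $ ix (?i + 1) = 0"
        then have "- (- 1/2 :: real) \<in> \<int>" using vi Ints_minus by fastforce
        then show False using half_not_Int by simp
      qed
      have "((g ^^ k) 0) $ ix (?i + 1) = real k * v $ ix (?i + 1)"
        using affm_pow_nth[OF c, where v=v and k=k and x=0] g' by simp
      then show ?thesis using k nz by simp
    qed
  qed
qed

end


lemma transl_inj: "transl a = transl b \<Longrightarrow> a = b"
  by (drule fun_cong[where x=0]) (simp add: transl_def)

definition comsq :: "(nat \<Rightarrow> 'n::finite) \<Rightarrow> (nat \<times> nat \<Rightarrow> real) \<Rightarrow> (real^'n \<Rightarrow> real^'n) \<Rightarrow> bool" where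
  "comsq ix r g \<longleftrightarrow> (\<forall>h\<in>Gp ix r. g \<circ> (h \<circ> h) = (h \<circ> h) \<circ> g)"

lemma sq_transl: "affm F v \<circ> affm F v = transl (flp F v + v)"
  by (simp add: affm_comp affm_transl)

context KS0 begin

lemma transl_Gp: "u \<in> Zv \<Longrightarrow> transl u \<in> Gp ix r"
  using GpI[of "{}" u r] by (simp add: affm_transl)

lemma comsq_transl: "comsq ix r (transl w)"
  unfolding comsq_def
proof
  fix h assume "h \<in> Gp ix r"
  then obtain I v where "h = affm (ix ` I) v" by (rule GpE)
  then show "transl w \<circ> (h \<circ> h) = h \<circ> h \<circ> transl w"
    by (simp add: sq_transl transl_comp add.commute)
qed

lemma comsq_imp:
  assumes g: "g \<in> Gp ix r" and c: "comsq ix r g"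
  shows "\<exists>u\<in>Zv. g = transl u"
proof -
  obtain I v where g': "g = affm (ix ` I) v" "I \<subseteq> {1..CARD('n)-1}" "v - Wv ix r I \<in> Zv"
    using g by (rule GpE)
  have "k \<notin> ix ` I" for k
  proof
    assume k: "k \<in> ix ` I"
    have "transl (axis k 1) \<in> Gp ix r" by (rule transl_Gp) simp
    then have "g \<circ> (transl (axis k 1) \<circ> transl (axis k 1)) = (transl (axis k 1) \<circ> transl (axis k 1)) \<circ> g"
      using c by (simp add: comsq_def)
    then have "affm (ix ` I) (flp (ix ` I) (axis k 1 + axis k 1) + v) = affm (ix ` I) (v + (axis k 1 + axis k 1))"
      using g' by (simp add: transl_comp affm_transl affm_comp)
    then have "flp (ix ` I) (axis k 1 + axis k 1) $ k = (axis k 1 + axis k 1) $ k"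
      using affm_inj by (metis add.commute add_right_cancel)
    then show False using k by simp
  qed
  then have "ix ` I = {}" by blast
  then have "I = {}" by simp
  then show ?thesis using g' by (auto simp: affm_transl)
qed

end

locale KSI = KS0 ix for ix :: "nat \<Rightarrow> 'n::finite" +
  fixes p q :: "nat \<times> nat \<Rightarrow> real" and \<phi> :: "(real^'n \<Rightarrow> real^'n) \<Rightarrow> (real^'n \<Rightarrow> real^'n)"
  assumes ap: "admissible CARD('n) p" and aq: "admissible CARD('n) q"
    and iso: "\<phi> \<in> iso (Kgroup ix p) (Kgroup ix q)"
begin

lemma phi_bij: "bij_betw \<phi> (Gp ix p) (Gp ix q)"
  using iso Kcarrier_eq[OF ap] Kcarrier_eq[OF aq] by (simp add: iso_def)

lemma phi_in: "g \<in> Gp ix p \<Longrightarrow> \<phi> g \<in> Gp ix q"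
  using phi_bij by (simp add: bij_betw_def) blast

lemma phi_mult: "g \<in> Gp ix p \<Longrightarrow> h \<in> Gp ix p \<Longrightarrow> \<phi> (g \<circ> h) = \<phi> g \<circ> \<phi> h"
  using iso Kcarrier_eq[OF ap] Kcarrier_eq[OF aq]
  by (auto simp: iso_def hom_def Kgroup_def isom_group_def)

lemma phi_inj: "g \<in> Gp ix p \<Longrightarrow> h \<in> Gp ix p \<Longrightarrow> \<phi> g = \<phi> h \<Longrightarrow> g = h"
  using phi_bij by (auto simp: bij_betw_def inj_on_def)

lemma phi_surj: "g' \<in> Gp ix q \<Longrightarrow> \<exists>g\<in>Gp ix p. \<phi> g = g'"
proof -
  assume "g' \<in> Gp ix q"
  then have "g' \<in> \<phi> ` Gp ix p" using phi_bij by (simp add: bij_betw_def)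
  then show ?thesis by (metis imageE)
qed

lemma phi_comsq:
  assumes g: "g \<in> Gp ix p" and c: "comsq ix q (\<phi> g)"
  shows "comsq ix p g"
  unfolding comsq_def
proof
  fix h assume h: "h \<in> Gp ix p"
  have hh: "h \<circ> h \<in> Gp ix p" using Gp_mult[OF ap h h] .
  have "\<phi> (g \<circ> (h \<circ> h)) = \<phi> ((h \<circ> h) \<circ> g)"
    using c phi_in[OF h] phi_mult[OF g hh] phi_mult[OF hh g] phi_mult[OF h h]
    by (simp add: comsq_def)
  then show "g \<circ> (h \<circ> h) = h \<circ> h \<circ> g"
    using phi_inj Gp_mult[OF ap g hh] Gp_mult[OF ap hh g] by blast
qed

lemma phi_transl: "u \<in> Zv \<Longrightarrow> \<exists>w\<in>Zv. \<phi> (transl u) = transl w"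
proof -
  assume u: "u \<in> Zv"
  have t: "transl u \<in> Gp ix p" using transl_Gp[OF u] .
  have "comsq ix q (\<phi> (transl u))"
    unfolding comsq_def
  proof
    fix h' assume h': "h' \<in> Gp ix q"
    then obtain h where h: "h \<in> Gp ix p" "\<phi> h = h'" using phi_surj by blast
    have hh: "h \<circ> h \<in> Gp ix p" using Gp_mult[OF ap h(1) h(1)] .
    have "transl u \<circ> (h \<circ> h) = (h \<circ> h) \<circ> transl u" using comsq_transl h(1) by (simp add: comsq_def)
    then have "\<phi> (transl u \<circ> (h \<circ> h)) = \<phi> ((h \<circ> h) \<circ> transl u)" by simp
    then show "\<phi> (transl u) \<circ> (h' \<circ> h') = h' \<circ> h' \<circ> \<phi> (transl u)"
      using phi_mult[OF t hh] phi_mult[OF hh t] phi_mult[OF h(1) h(1)] h(2) by simp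
  qed
  then show ?thesis using comsq_imp phi_in[OF t] by blast
qed

definition A :: "real^'n \<Rightarrow> real^'n" where
  "A u = (SOME w. w \<in> Zv \<and> \<phi> (transl u) = transl w)"

lemma A_prop: "u \<in> Zv \<Longrightarrow> A u \<in> Zv \<and> \<phi> (transl u) = transl (A u)"
proof -
  assume u: "u \<in> Zv"
  from phi_transl[OF u] have "\<exists>w. w \<in> Zv \<and> \<phi> (transl u) = transl w" by blast
  then show ?thesis unfolding A_def by (rule someI_ex)
qed

lemma A_Zv: "u \<in> Zv \<Longrightarrow> A u \<in> Zv" using A_prop by blast
lemma A_phi: "u \<in> Zv \<Longrightarrow> \<phi> (transl u) = transl (A u)" using A_prop by blast

lemma A_add: "u \<in> Zv \<Longrightarrow> u' \<in> Zv \<Longrightarrow> A (u + u') = A u + A u'"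
proof -
  assume u: "u \<in> Zv" and u': "u' \<in> Zv"
  have "transl (A (u + u')) = \<phi> (transl u \<circ> transl u')" using A_phi[of "u + u'"] u u' by (simp add: transl_comp Zv_add)
  also have "\<dots> = transl (A u) \<circ> transl (A u')" using phi_mult[OF transl_Gp[OF u] transl_Gp[OF u']] A_phi u u' by simp
  finally show ?thesis by (simp add: transl_comp transl_inj)
qed

lemma A_zero: "A 0 = 0"
  using A_add[of 0 0] by simp

lemma A_uminus: "u \<in> Zv \<Longrightarrow> A (- u) = - A u"
proof -
  assume u: "u \<in> Zv"
  have "A u + A (- u) = 0" using A_add[of u "- u"] A_zero u by (simp add: Zv_uminus)
  then show ?thesis by (metis add.commute eq_neg_iff_add_eq_0)
qed

lemma A_nat: "u \<in> Zv \<Longrightarrow> A (of_nat n *\<^sub>R u) = of_nat n *\<^sub>R A u"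
proof (induction n)
  case 0 then show ?case by (simp add: A_zero)
next
  case (Suc n)
  have "of_nat n *\<^sub>R u \<in> Zv" using Suc.prems by (intro Zv_scale) auto
  then have "A (of_nat (Suc n) *\<^sub>R u) = A (of_nat n *\<^sub>R u) + A u"
    using A_add[of "of_nat n *\<^sub>R u" u] Suc.prems by (simp add: algebra_simps)
  then show ?case using Suc by (simp add: algebra_simps)
qed

lemma A_scale: "c \<in> \<int> \<Longrightarrow> u \<in> Zv \<Longrightarrow> A (c *\<^sub>R u) = c *\<^sub>R A u"
proof -
  assume c: "c \<in> \<int>" and u: "u \<in> Zv"
  obtain z where z: "c = of_int z" using c by (auto elim: Ints_cases)
  show ?thesis
  proof (cases "z \<ge> 0")
    case True
    then have "c = of_nat (nat z)" using z by simp
    then show ?thesis using A_nat[OF u] by simp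
  next
    case False
    then have cz: "c = - of_nat (nat (- z))" using z by simp
    have "of_nat (nat (- z)) *\<^sub>R u \<in> Zv" using u by (intro Zv_scale) auto
    then show ?thesis using A_uminus A_nat[OF u] cz by simp
  qed
qed

lemma A_sum:
  assumes u: "u \<in> Zv" and S: "finite S"
  shows "A (\<Sum>k\<in>S. (u $ k) *\<^sub>R axis k 1) = (\<Sum>k\<in>S. (u $ k) *\<^sub>R A (axis k 1))"
  using S
proof (induction S rule: finite_induct)
  case empty then show ?case by (simp add: A_zero)
next
  case (insert k S)
  have uk: "u $ k \<in> \<int>" using u unfolding Zv_def by blast
  have z1: "(u $ k) *\<^sub>R axis k 1 \<in> Zv" using uk by (intro Zv_scale) auto
  have z2: "(\<Sum>k\<in>S. (u $ k) *\<^sub>R axis k 1) \<in> Zv"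
  proof (intro Zv_sum Zv_scale)
    fix j show "u $ j \<in> \<int>" using u unfolding Zv_def by blast
  qed simp
  show ?case using insert A_add[OF z1 z2] A_scale[OF uk] by simp
qed

lemma A_lin: "u \<in> Zv \<Longrightarrow> A u = (\<Sum>k\<in>UNIV. (u $ k) *\<^sub>R A (axis k 1))"
  using A_sum[of u UNIV] by (simp add: sum_axis)

lemma A_inj0: "u \<in> Zv \<Longrightarrow> A u = 0 \<Longrightarrow> u = 0"
proof -
  assume u: "u \<in> Zv" and a: "A u = 0"
  have "\<phi> (transl u) = \<phi> (transl 0)" using A_phi[OF u] A_phi[of 0] a A_zero by simp
  then have "transl u = transl 0" using phi_inj transl_Gp u by blast
  then show ?thesis by (rule transl_inj)
qed

lemma A_surj: "w \<in> Zv \<Longrightarrow> \<exists>u\<in>Zv. A u = w"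
proof -
  assume w: "w \<in> Zv"
  obtain g where g: "g \<in> Gp ix p" "\<phi> g = transl w" using phi_surj[OF transl_Gp[OF w]] by blast
  then have "comsq ix p g" using phi_comsq comsq_transl by metis
  then obtain u where u: "u \<in> Zv" "g = transl u" using comsq_imp g(1) by blast
  then have "transl (A u) = transl w" using A_phi g by simp
  then show ?thesis using u transl_inj by blast
qed

lemma A_conj:
  assumes g: "g \<in> Gp ix p" "g = affm F v" and g': "\<phi> g = affm F' v'" and u: "u \<in> Zv"
  shows "A (flp F u) = flp F' (A u)"
proof -
  have fu: "flp F u \<in> Zv" using u by blast
  have "g \<circ> transl u = transl (flp F u) \<circ> g"
    using g(2) by (simp add: affm_transl affm_comp add.commute)
  then have "\<phi> (g \<circ> transl u) = \<phi> (transl (flp F u) \<circ> g)" by simp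
  then have "\<phi> g \<circ> transl (A u) = transl (A (flp F u)) \<circ> \<phi> g"
    using phi_mult[OF g(1) transl_Gp[OF u]] phi_mult[OF transl_Gp[OF fu] g(1)] A_phi[OF u] A_phi[OF fu]
    by simp
  then have "affm F' (flp F' (A u) + v') = affm F' (v' + A (flp F u))"
    using g' by (simp add: affm_transl affm_comp)
  then show ?thesis using affm_inj by (metis add.commute add_left_cancel)
qed

end


definition ev :: "real \<Rightarrow> bool" where "ev x \<longleftrightarrow> x / 2 \<in> \<int>"

lemma ev_add: "ev a \<Longrightarrow> ev b \<Longrightarrow> ev (a + b)"
  unfolding ev_def by (metis Ints_add add_divide_distrib)
lemma ev_diff: "ev a \<Longrightarrow> ev b \<Longrightarrow> ev (a - b)"
  unfolding ev_def by (metis Ints_diff diff_divide_distrib)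
lemma ev_double: "x \<in> \<int> \<Longrightarrow> ev (2 * x)"
  unfolding ev_def by simp
lemma ev_zero: "ev 0" unfolding ev_def by simp
lemma not_ev_one: "\<not> ev 1"
  unfolding ev_def using half_not_Int by blast
lemma ev_sign: "x \<in> \<int> \<Longrightarrow> l = 1 \<or> l = -1 \<Longrightarrow> ev (x * l - x)"
proof -
  assume x: "x \<in> \<int>" and l: "l = 1 \<or> l = -1"
  from l show ?thesis
  proof
    assume "l = 1" then show ?thesis by (simp add: ev_zero)
  next
    assume "l = -1" then have eq: "x * l - x = 2 * (- x)" by simp
    have "ev (2 * (- x))" by (rule ev_double[OF Ints_minus[OF x]])
    then show ?thesis using eq by metis
  qed
qed

lemma Ints_mult_eq_1: "(a::real) \<in> \<int> \<Longrightarrow> b \<in> \<int> \<Longrightarrow> a * b = 1 \<Longrightarrow> b = 1 \<or> b = -1"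
proof -
  assume "a \<in> \<int>" "b \<in> \<int>" "a * b = 1"
  then obtain x y where xy: "a = of_int x" "b = of_int y" by (auto elim!: Ints_cases)
  then have "of_int (x * y) = (1::real)" using \<open>a * b = 1\<close> by simp
  then have "x * y = 1" by linarith
  then have "y = 1 \<or> y = -1" using pos_zmult_eq_1_iff_lemma[of y x] by (simp add: mult.commute)
  then show ?thesis using xy by auto
qed

lemma flp_fix: "(\<And>k. k \<in> F \<Longrightarrow> c $ k = 0) \<Longrightarrow> flp F c = c"
  by (simp add: vec_eq_iff)

context KSI begin

definition am :: "(nat \<times> nat \<Rightarrow> real) \<Rightarrow> nat \<Rightarrow> real^'n \<Rightarrow> real^'n" where
  "am r i = affm {ix i} (Cvec ix r i)"

lemma am_in: "i \<in> {1..CARD('n)-1} \<Longrightarrow> am r i \<in> Gp ix r"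
  using GpI[of "{i}" "Cvec ix r i" r] by (simp add: am_def Wv_single)

lemma am_sq: "i \<in> {1..CARD('n)-1} \<Longrightarrow> am r i \<circ> am r i = transl (2 *\<^sub>R Cvec ix r i)"
proof -
  assume i: "i \<in> {1..CARD('n)-1}"
  have "flp {ix i} (Cvec ix r i) = Cvec ix r i" using Cvec_nth_self[OF i] by (intro flp_fix) auto
  then show ?thesis by (simp add: am_def sq_transl scaleR_2)
qed

lemma expand:
  assumes u: "u \<in> Zv"
  shows "A u $ c = (\<Sum>k\<in>UNIV. u $ k * A (axis k 1) $ c)"
  using A_lin[OF u] by simp

lemma sum_single:
  fixes f :: "'n \<Rightarrow> real"
  assumes "\<And>k. k \<noteq> k0 \<Longrightarrow> f k = (0::real)"
  shows "(\<Sum>k\<in>UNIV. f k) = f k0"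
proof -
  have "(\<Sum>k\<in>UNIV. f k) = (\<Sum>k\<in>UNIV. if k = k0 then f k0 else 0)"
    using assms by (intro sum.cong) auto
  then show ?thesis by simp
qed

lemma axis_ne0: "axis k (1::real) \<noteq> 0"
proof
  assume "axis k (1::real) = 0"
  then have "axis k (1::real) $ k = 0" by simp
  then show False by simp
qed

lemma supp1:
  assumes i: "i \<in> {1..CARD('n)-1}" and f: "\<phi> (am p i) = affm F' v'"
    and k: "k \<noteq> ix i" and c: "c \<in> F'"
  shows "A (axis k 1) $ c = 0"
proof -
  have "flp {ix i} (axis k 1) = axis k (1::real)" using k by (intro flp_fix) auto
  then have "A (axis k 1) = flp F' (A (axis k 1))"
    using A_conj[OF am_in[OF i] am_def f, of "axis k 1"] by simp
  then have "A (axis k 1) $ c = - (A (axis k 1) $ c)" using c by (metis flp_nth)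
  then show ?thesis by simp
qed

lemma supp2:
  assumes i: "i \<in> {1..CARD('n)-1}" and f: "\<phi> (am p i) = affm F' v'"
    and c: "c \<notin> F'"
  shows "A (axis (ix i) 1) $ c = 0"
proof -
  have "flp {ix i} (axis (ix i) 1) = - axis (ix i) (1::real)" by (simp add: vec_eq_iff)
  then have "- A (axis (ix i) 1) = flp F' (A (axis (ix i) 1))"
    using A_conj[OF am_in[OF i] am_def f, of "axis (ix i) 1"] A_uminus[of "axis (ix i) 1"] by simp
  then have "- (A (axis (ix i) 1) $ c) = A (axis (ix i) 1) $ c" using c by (metis flp_nth vector_uminus_component)
  then show ?thesis by simp
qed

lemma A_axis_ne0: "A (axis k 1) \<noteq> 0"
  using A_inj0[of "axis k 1"] axis_ne0 by auto

lemma phi_am_form: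
  assumes i: "i \<in> {1..CARD('n)-1}"
  shows "\<exists>s v'. s \<in> {1..CARD('n)-1} \<and> \<phi> (am p i) = affm {ix s} v' \<and> v' - Cvec ix q s \<in> Zv"
proof -
  obtain J v' where J: "\<phi> (am p i) = affm (ix ` J) v'" "J \<subseteq> {1..CARD('n)-1}" "v' - Wv ix q J \<in> Zv"
    using phi_in[OF am_in[OF i]] by (rule GpE)
  have Jn: "J \<subseteq> {1..CARD('n)}" using J(2) by (rule sub_N)
  have ne: "J \<noteq> {}"
  proof
    assume "J = {}"
    then have "A (axis (ix i) 1) $ c = 0" for c using supp2[OF i J(1)] by simp
    then have "A (axis (ix i) 1) = 0" by (simp add: vec_eq_iff)
    then show False using A_axis_ne0 by blast
  qed
  have one: "j = j'" if j: "j \<in> J" "j' \<in> J" for j j'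
  proof (rule ccontr)
    assume jj: "j \<noteq> j'"
    have cc: "ix j \<noteq> ix j'" using jj ix_eq j Jn by blast
    have key: "(axis c 1 :: real^'n) $ c' = A u $ c'" if "A u = axis c 1" for u c c' using that by simp
    have red: "A u $ c' = u $ ix i * A (axis (ix i) 1) $ c'" if "u \<in> Zv" "c' \<in> ix ` J" for u c'
    proof -
      have "A u $ c' = (\<Sum>k\<in>UNIV. u $ k * A (axis k 1) $ c')" by (rule expand[OF that(1)])
      also have "\<dots> = u $ ix i * A (axis (ix i) 1) $ c'"
        by (rule sum_single) (use supp1[OF i J(1) _ that(2)] in auto)
      finally show ?thesis .
    qed
    obtain u where u: "u \<in> Zv" "A u = axis (ix j) 1" using A_surj[of "axis (ix j) 1"] by auto
    obtain u' where u': "u' \<in> Zv" "A u' = axis (ix j') 1" using A_surj[of "axis (ix j') 1"] by auto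
    have e1: "1 = u $ ix i * A (axis (ix i) 1) $ ix j" using red[OF u(1), of "ix j"] u(2) j by simp
    have e2: "0 = u $ ix i * A (axis (ix i) 1) $ ix j'" using red[OF u(1), of "ix j'"] u(2) j cc by simp
    have e3: "1 = u' $ ix i * A (axis (ix i) 1) $ ix j'" using red[OF u'(1), of "ix j'"] u'(2) j by simp
    have "u $ ix i \<noteq> 0" using e1 by auto
    then have "A (axis (ix i) 1) $ ix j' = 0" using e2 by simp
    then show False using e3 by simp
  qed
  obtain s where s: "s \<in> J" using ne by blast
  then have Js: "J = {s}" using one by blast
  show ?thesis using J Js s by (intro exI[of _ s] exI[of _ v']) (auto simp: Wv_single)
qed

definition \<sigma> :: "nat \<Rightarrow> nat" where
  "\<sigma> i = (SOME s. \<exists>v'. s \<in> {1..CARD('n)-1} \<and> \<phi> (am p i) = affm {ix s} v' \<and> v' - Cvec ix q s \<in> Zv)"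

lemma sigma_prop:
  assumes i: "i \<in> {1..CARD('n)-1}"
  shows "\<exists>v'. \<sigma> i \<in> {1..CARD('n)-1} \<and> \<phi> (am p i) = affm {ix (\<sigma> i)} v' \<and> v' - Cvec ix q (\<sigma> i) \<in> Zv"
  unfolding \<sigma>_def using phi_am_form[OF i] by (rule someI_ex)

lemma sigma_range: "i \<in> {1..CARD('n)-1} \<Longrightarrow> \<sigma> i \<in> {1..CARD('n)-1}"
  using sigma_prop by blast

lemma inN: "i \<in> {1..CARD('n)-1} \<Longrightarrow> i \<in> {1..CARD('n)}" by auto

lemma T1: "i \<in> {1..CARD('n)-1} \<Longrightarrow> c \<noteq> ix (\<sigma> i) \<Longrightarrow> A (axis (ix i) 1) $ c = 0"
  using sigma_prop supp2 by (metis singletonD)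

lemma T2: "i \<in> {1..CARD('n)-1} \<Longrightarrow> k \<noteq> ix i \<Longrightarrow> A (axis k 1) $ ix (\<sigma> i) = 0"
  using sigma_prop supp1 by (metis singletonI)

lemma sigma_inj: "inj_on \<sigma> {1..CARD('n)-1}"
proof (rule inj_onI, rule ccontr)
  fix i j assume i: "i \<in> {1..CARD('n)-1}" and j: "j \<in> {1..CARD('n)-1}" and e: "\<sigma> i = \<sigma> j" and ne: "i \<noteq> j"
  have "ix i \<noteq> ix j" using ix_eq[OF inN[OF i] inN[OF j]] ne by simp
  then have "A (axis (ix i) 1) $ c = 0" for c
    using T1[OF i, of c] T2[OF j, of "ix i"] e by metis
  then have "A (axis (ix i) 1) = 0" by (simp add: vec_eq_iff)
  then show False using A_axis_ne0 by blast
qed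

lemma sigma_surj: "\<sigma> ` {1..CARD('n)-1} = {1..CARD('n)-1}"
  using endo_inj_surj[OF _ _ sigma_inj] sigma_range by blast

definition \<sigma>' :: "nat \<Rightarrow> nat" where "\<sigma>' m = (if m = CARD('n) then CARD('n) else \<sigma> m)"

lemma inN1: "m \<in> {1..CARD('n)} \<Longrightarrow> m \<noteq> CARD('n) \<Longrightarrow> m \<in> {1..CARD('n)-1}" by auto

lemma sigma'_range: "m \<in> {1..CARD('n)} \<Longrightarrow> \<sigma>' m \<in> {1..CARD('n)}"
proof (cases "m = CARD('n)")
  case True then show ?thesis using N2 by (simp add: \<sigma>'_def)
next
  case False
  assume m: "m \<in> {1..CARD('n)}"
  then show ?thesis using False inN[OF sigma_range[OF inN1[OF m False]]] by (simp add: \<sigma>'_def)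
qed

lemma sigma'_inj:
  assumes m: "m \<in> {1..CARD('n)}" and m': "m' \<in> {1..CARD('n)}" and e: "\<sigma>' m = \<sigma>' m'"
  shows "m = m'"
proof (cases "m = CARD('n)")
  case a1: True
  show ?thesis
  proof (cases "m' = CARD('n)")
    case True then show ?thesis using a1 by simp
  next
    case False
    then have "\<sigma> m' \<le> CARD('n) - 1" using sigma_range[OF inN1[OF m' False]] by simp
    moreover have "\<sigma> m' = CARD('n)" using e a1 False by (simp add: \<sigma>'_def)
    ultimately show ?thesis using N2 by linarith
  qed
next
  case a1: False
  show ?thesis
  proof (cases "m' = CARD('n)")
    case True
    have "\<sigma> m \<le> CARD('n) - 1" using sigma_range[OF inN1[OF m a1]] by simp
    moreover have "\<sigma> m = CARD('n)" using e a1 True by (simp add: \<sigma>'_def)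
    ultimately show ?thesis using N2 by linarith
  next
    case False
    then have "\<sigma> m = \<sigma> m'" using e a1 by (simp add: \<sigma>'_def)
    then show ?thesis using sigma_inj inN1[OF m a1] inN1[OF m' False] by (simp add: inj_on_def)
  qed
qed

lemma T1':
  assumes m: "m \<in> {1..CARD('n)}" and c: "c \<noteq> ix (\<sigma>' m)"
  shows "A (axis (ix m) 1) $ c = 0"
proof (cases "m = CARD('n)")
  case False
  then have "m \<in> {1..CARD('n)-1}" using m by auto
  then show ?thesis using T1 c False by (simp add: \<sigma>'_def)
next
  case True
  obtain m'' where m'': "m'' \<in> {1..CARD('n)}" "c = ix m''" by (rule ix_cases)
  have "m'' \<noteq> CARD('n)"
  proof
    assume "m'' = CARD('n)"
    then show False using c True m'' by (simp add: \<sigma>'_def)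
  qed
  then have "m'' \<in> \<sigma> ` {1..CARD('n)-1}" using m'' sigma_surj by auto
  then obtain i where i: "i \<in> {1..CARD('n)-1}" "m'' = \<sigma> i" by auto
  have "m \<noteq> i" using True i(1) N2 by auto
  then have "ix m \<noteq> ix i" using ix_eq[OF m inN[OF i(1)]] by simp
  then show ?thesis using T2[OF i(1)] m'' i by simp
qed

lemma single_coord:
  assumes m: "m \<in> {1..CARD('n)}" and u: "u \<in> Zv"
  shows "A u $ ix (\<sigma>' m) = u $ ix m * A (axis (ix m) 1) $ ix (\<sigma>' m)"
proof -
  have "A u $ ix (\<sigma>' m) = (\<Sum>k\<in>UNIV. u $ k * A (axis k 1) $ ix (\<sigma>' m))" by (rule expand[OF u])
  also have "\<dots> = u $ ix m * A (axis (ix m) 1) $ ix (\<sigma>' m)"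
  proof (rule sum_single)
    fix k assume k: "k \<noteq> ix m"
    obtain m' where m': "m' \<in> {1..CARD('n)}" "k = ix m'" by (rule ix_cases)
    have "m' \<noteq> m" using k m' by auto
    then have "\<sigma>' m' \<noteq> \<sigma>' m" using sigma'_inj m m' by metis
    then have "ix (\<sigma>' m) \<noteq> ix (\<sigma>' m')" using ix_eq sigma'_range m m' by metis
    then show "u $ k * A (axis k 1) $ ix (\<sigma>' m) = 0" using T1'[OF m'(1)] m' by simp
  qed
  finally show ?thesis .
qed

lemma lambda_unit:
  assumes m: "m \<in> {1..CARD('n)}"
  shows "A (axis (ix m) 1) $ ix (\<sigma>' m) = 1 \<or> A (axis (ix m) 1) $ ix (\<sigma>' m) = -1"
proof -
  obtain u where u: "u \<in> Zv" "A u = axis (ix (\<sigma>' m)) 1" using A_surj[of "axis (ix (\<sigma>' m)) 1"] by auto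
  have "1 = u $ ix m * A (axis (ix m) 1) $ ix (\<sigma>' m)" using single_coord[OF m u(1)] u(2) by simp
  moreover have "u $ ix m \<in> \<int>" using u(1) unfolding Zv_def by blast
  moreover have "A (axis (ix m) 1) $ ix (\<sigma>' m) \<in> \<int>" using A_Zv[of "axis (ix m) 1"] unfolding Zv_def by auto
  ultimately show ?thesis using Ints_mult_eq_1 by metis
qed

end


lemma ev_uminus: "ev x \<Longrightarrow> ev (- x)"
  unfolding ev_def by (metis Ints_minus minus_divide_left)

context KS0 begin

lemma Cvec2_nth:
  assumes i: "i \<in> {1..CARD('n)-1}" and m: "m \<in> {1..CARD('n)}"
  shows "(2 *\<^sub>R Cvec ix r i) $ ix m = (if m = i + 1 then 1 else 0) + (if m < i then 2 * r (m,i) else 0)"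
  using Cvec_nth[OF i m, of r] by (simp add: distrib_left)

end

context KSI begin

lemma key:
  assumes i: "i \<in> {1..CARD('n)-1}" and m: "m \<in> {1..CARD('n)}"
  shows "ev ((2 *\<^sub>R Cvec ix p i) $ ix m - (2 *\<^sub>R Cvec ix q (\<sigma> i)) $ ix (\<sigma>' m))"
proof -
  let ?s = "\<sigma> i"
  obtain v' where s: "?s \<in> {1..CARD('n)-1}" and f: "\<phi> (am p i) = affm {ix ?s} v'"
    and v': "v' - Cvec ix q ?s \<in> Zv"
    using sigma_prop[OF i] by blast
  let ?c2 = "2 *\<^sub>R Cvec ix p i"
  have c2: "?c2 \<in> Zv" by (rule Cvec_2Z[OF ap i])
  have "transl (A ?c2) = \<phi> (am p i \<circ> am p i)" using A_phi[OF c2] am_sq[OF i] by simp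
  also have "\<dots> = \<phi> (am p i) \<circ> \<phi> (am p i)" using phi_mult am_in[OF i] by blast
  also have "\<dots> = transl (flp {ix ?s} v' + v')" using f by (simp add: sq_transl)
  finally have Ac: "A ?c2 = flp {ix ?s} v' + v'" by (rule transl_inj)
  let ?c0 = "ix (\<sigma>' m)"
  let ?l = "A (axis (ix m) 1) $ ?c0"
  have sc: "A ?c2 $ ?c0 = ?c2 $ ix m * ?l" by (rule single_coord[OF m c2])
  have e1: "ev ((flp {ix ?s} v' + v') $ ?c0 - (2 *\<^sub>R Cvec ix q ?s) $ ?c0)"
  proof (cases "?c0 = ix ?s")
    case True
    have "Cvec ix q ?s $ ix ?s = 0" by (rule Cvec_nth_self[OF s])
    then show ?thesis using True by (simp add: ev_zero)
  next
    case False
    have z: "(v' - Cvec ix q ?s) $ ?c0 \<in> \<int>" using v' unfolding Zv_def by blast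
    have "(flp {ix ?s} v' + v') $ ?c0 - (2 *\<^sub>R Cvec ix q ?s) $ ?c0 = 2 * ((v' - Cvec ix q ?s) $ ?c0)"
      using False by simp
    then show ?thesis using ev_double[OF z] by simp
  qed
  have x: "?c2 $ ix m \<in> \<int>" using c2 unfolding Zv_def by blast
  have e2: "ev (?c2 $ ix m * ?l - ?c2 $ ix m)" by (rule ev_sign[OF x lambda_unit[OF m]])
  have eq: "?c2 $ ix m - (2 *\<^sub>R Cvec ix q ?s) $ ?c0 =
        ((flp {ix ?s} v' + v') $ ?c0 - (2 *\<^sub>R Cvec ix q ?s) $ ?c0) - (?c2 $ ix m * ?l - ?c2 $ ix m)"
    using Ac sc by simp
  show ?thesis unfolding eq by (rule ev_diff[OF e1 e2])
qed

lemma sigma_id: "i \<in> {1..CARD('n)-1} \<Longrightarrow> \<sigma> i = i"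
proof (induction "CARD('n) - i" arbitrary: i rule: less_induct)
  case less
  have i: "i \<in> {1..CARD('n)-1}" by fact
  have m: "i + 1 \<in> {1..CARD('n)}" using i by auto
  have sm: "\<sigma>' (i + 1) = i + 1"
  proof (cases "i + 1 = CARD('n)")
    case True then show ?thesis by (simp add: \<sigma>'_def)
  next
    case False
    then have "i + 1 \<in> {1..CARD('n)-1}" using i by auto
    moreover have "CARD('n) - (i + 1) < CARD('n) - i" using i by auto
    ultimately show ?thesis using less.hyps False by (simp add: \<sigma>'_def)
  qed
  have si: "\<sigma> i \<in> {1..CARD('n)-1}" by (rule sigma_range[OF i])
  have le: "\<sigma> i \<le> i"
  proof (rule ccontr)
    assume "\<not> \<sigma> i \<le> i"
    then have lt: "CARD('n) - \<sigma> i < CARD('n) - i" using si by auto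
    have "\<sigma> (\<sigma> i) = \<sigma> i" using less.hyps[OF lt si] .
    then have "\<sigma> i = i" using sigma_inj si i by (simp add: inj_on_def)
    then show False using \<open>\<not> \<sigma> i \<le> i\<close> by simp
  qed
  have k: "ev ((2 *\<^sub>R Cvec ix p i) $ ix (i + 1) - (2 *\<^sub>R Cvec ix q (\<sigma> i)) $ ix (i + 1))"
    using key[OF i m] sm by simp
  have a: "(2 *\<^sub>R Cvec ix p i) $ ix (i + 1) = 1" using Cvec2_nth[OF i m, of p] by simp
  have b: "(2 *\<^sub>R Cvec ix q (\<sigma> i)) $ ix (i + 1) = (if i = \<sigma> i then 1 else 0)"
    using Cvec2_nth[OF si m, of q] le by simp
  show ?case
  proof (rule ccontr)
    assume "\<sigma> i \<noteq> i"
    then show False using k a b not_ev_one by simp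
  qed
qed

lemma p_eq_q: "p = q"
proof (rule ext, clarify)
  fix j i
  show "p (j,i) = q (j,i)"
  proof (cases "1 \<le> j \<and> j < i \<and> i \<le> CARD('n) - 1")
    case False
    then show ?thesis using ap aq unfolding admissible_def by metis
  next
    case True
    have i: "i \<in> {1..CARD('n)-1}" using True by auto
    have j: "j \<in> {1..CARD('n)-1}" using True by auto
    have m: "j \<in> {1..CARD('n)}" using True by auto
    have sj: "\<sigma>' j = j" using sigma_id[OF j] True by (auto simp: \<sigma>'_def)
    have k: "ev ((2 *\<^sub>R Cvec ix p i) $ ix j - (2 *\<^sub>R Cvec ix q i) $ ix j)"
      using key[OF i m] sj sigma_id[OF i] by simp
    have "(2 *\<^sub>R Cvec ix p i) $ ix j = 2 * p (j,i)" using Cvec2_nth[OF i m, of p] True by simp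
    moreover have "(2 *\<^sub>R Cvec ix q i) $ ix j = 2 * q (j,i)" using Cvec2_nth[OF i m, of q] True by simp
    ultimately have k': "ev (2 * p (j,i) - 2 * q (j,i))" using k by simp
    have pv: "p (j,i) = 0 \<or> p (j,i) = 1/2" using adm_vals[OF ap, of j i] by simp
    have qv: "q (j,i) = 0 \<or> q (j,i) = 1/2" using adm_vals[OF aq, of j i] by simp
    show ?thesis
    proof (rule ccontr)
      assume ne: "p (j,i) \<noteq> q (j,i)"
      have "2 * p (j,i) - 2 * q (j,i) = 1 \<or> 2 * p (j,i) - 2 * q (j,i) = -1" using pv qv ne by auto
      then show False using k' not_ev_one ev_uminus by fastforce
    qed
  qed
qed

end


definition Pset :: "nat \<Rightarrow> (nat \<times> nat) set" where
  "Pset M = {(j,i). 1 \<le> j \<and> j < i \<and> i \<le> M}"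

lemma Pset_finite: "finite (Pset M)"
proof -
  have "Pset M \<subseteq> {0..M} \<times> {0..M}" by (auto simp: Pset_def)
  then show ?thesis by (rule finite_subset) simp
qed

lemma Pset_card: "2 * card (Pset M) = M * (M - 1)"
proof (induction M)
  case 0
  have "Pset 0 = {}" by (auto simp: Pset_def)
  then show ?case by simp
next
  case (Suc M)
  have eq: "Pset (Suc M) = Pset M \<union> (\<lambda>j. (j, Suc M)) ` {1..M}"
    by (auto simp: Pset_def)
  have disj: "Pset M \<inter> (\<lambda>j. (j, Suc M)) ` {1..M} = {}" by (auto simp: Pset_def)
  have c2: "card ((\<lambda>j. (j, Suc M)) ` {1..M}) = M"
    by (subst card_image) (auto simp: inj_on_def)
  have "card (Pset (Suc M)) = card (Pset M) + M"
    unfolding eq using Pset_finite disj c2 by (subst card_Un_disjoint) auto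
  then have "2 * card (Pset (Suc M)) = M * (M - 1) + 2 * M" using Suc.IH by simp
  also have "\<dots> = Suc M * (Suc M - 1)" by (cases M) (auto simp: algebra_simps)
  finally show ?case .
qed

lemma adm_iff: "admissible n p \<longleftrightarrow> (\<forall>x\<in>Pset (n - 1). p x \<in> {0, 1/2}) \<and> (\<forall>x. x \<notin> Pset (n - 1) \<longrightarrow> p x = 0)"
  unfolding admissible_def Pset_def by auto

lemma adm_card: "card {p. admissible n p} = 2 ^ card (Pset (n - 1))"
proof -
  let ?P = "Pset (n - 1)"
  let ?B = "PiE ?P (\<lambda>_. {0, 1/2::real})"
  have "bij_betw (\<lambda>p. restrict p ?P) {p. admissible n p} ?B"
  proof (rule bij_betw_byWitness[where f' = "\<lambda>f x. if x \<in> ?P then f x else 0"])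
    show "\<forall>a\<in>{p. admissible n p}. (\<lambda>x. if x \<in> ?P then restrict a ?P x else 0) = a"
      by (auto simp: adm_iff fun_eq_iff)
    show "\<forall>a'\<in>?B. restrict (\<lambda>x. if x \<in> ?P then a' x else 0) ?P = a'"
      by (auto simp: fun_eq_iff PiE_def extensional_def)
    show "(\<lambda>p. restrict p ?P) ` {p. admissible n p} \<subseteq> ?B"
      by (auto simp: adm_iff)
    show "(\<lambda>f x. if x \<in> ?P then f x else 0) ` ?B \<subseteq> {p. admissible n p}"
    proof
      fix p assume "p \<in> (\<lambda>f x. if x \<in> ?P then f x else 0) ` ?B"
      then obtain f where f: "f \<in> ?B" "p = (\<lambda>x. if x \<in> ?P then f x else 0)" by blast
      have "\<forall>x\<in>?P. p x \<in> {0, 1/2}"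
      proof
        fix x assume x: "x \<in> ?P"
        then have "p x = f x" using f(2) by simp
        then show "p x \<in> {0, 1/2}" using PiE_mem[OF f(1) x] by metis
      qed
      moreover have "\<forall>x. x \<notin> ?P \<longrightarrow> p x = 0" using f(2) by simp
      ultimately show "p \<in> {p. admissible n p}" unfolding adm_iff by blast
    qed
  qed
  then have "card {p. admissible n p} = card ?B" by (rule bij_betw_same_card)
  also have "\<dots> = 2 ^ card ?P" using Pset_finite by (simp add: card_PiE numeral_2_eq_2)
  finally show ?thesis .
qed

lemma Kgroup_rec: "Kgroup ix p = (isom_group TYPE('n::finite))\<lparr>carrier := carrier (Kgroup ix p)\<rparr>"
  by (simp add: Kgroup_def subgroup_generated_def)

theorem corollary4p5:
  fixes ix :: "nat \<Rightarrow> 'n::finite"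
  assumes "CARD('n) \<ge> 2"
    and "bij_betw ix {1..CARD('n)} UNIV"
  shows "card (Kfamily ix) = 2 ^ ((CARD('n) - 1) * (CARD('n) - 2) div 2)
     \<and> (\<forall>\<Gamma>\<in>Kfamily ix. bieberbach \<Gamma>)
     \<and> (\<forall>p q. admissible CARD('n) p \<and> admissible CARD('n) q \<and> p \<noteq> q
              \<longrightarrow> \<not> (Kgroup ix p \<cong> Kgroup ix q))"
proof -
  interpret KS0 ix using assms by (rule KS0.intro)
  have noniso: "p = q" if p: "admissible CARD('n) p" and q: "admissible CARD('n) q"
    and i: "Kgroup ix p \<cong> Kgroup ix q" for p q
  proof -
    obtain \<phi> where \<phi>: "\<phi> \<in> iso (Kgroup ix p) (Kgroup ix q)" using i by (auto simp: is_iso_def)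
    have "KSI ix p q \<phi>" using assms p q \<phi> by (simp add: KSI_def KSI_axioms_def KS0_def)
    then show ?thesis by (rule KSI.p_eq_q)
  qed
  have inj: "inj_on (\<lambda>p. carrier (Kgroup ix p)) {p. admissible CARD('n) p}"
  proof (rule inj_onI)
    fix p q assume p: "p \<in> {p. admissible CARD('n) p}" and q: "q \<in> {p. admissible CARD('n) p}"
      and e: "carrier (Kgroup ix p) = carrier (Kgroup ix q)"
    have "Kgroup ix p = Kgroup ix q" using Kgroup_rec[of ix p] Kgroup_rec[of ix q] e by metis
    then have "Kgroup ix p \<cong> Kgroup ix q" using iso_set_refl[of "Kgroup ix p"] by (auto simp: is_iso_def)
    then show "p = q" using noniso p q by simp
  qed
  have fam: "Kfamily ix = (\<lambda>p. carrier (Kgroup ix p)) ` {p. admissible CARD('n) p}"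
    by (auto simp: Kfamily_def)
  have "card (Kfamily ix) = card {p. admissible CARD('n) p}"
    unfolding fam by (rule card_image[OF inj])
  also have "\<dots> = 2 ^ card (Pset (CARD('n) - 1))" by (rule adm_card)
  also have "card (Pset (CARD('n) - 1)) = (CARD('n) - 1) * (CARD('n) - 2) div 2"
  proof -
    have e: "CARD('n) - 1 - 1 = CARD('n) - 2" by simp
    have h: "2 * card (Pset (CARD('n) - 1)) = (CARD('n) - 1) * (CARD('n) - 2)"
      using Pset_card[of "CARD('n) - 1"] unfolding e .
    have "card (Pset (CARD('n) - 1)) = (2 * card (Pset (CARD('n) - 1))) div 2" by simp
    also have "\<dots> = (CARD('n) - 1) * (CARD('n) - 2) div 2" by (simp only: h)
    finally show ?thesis .
  qed
  finally have c: "card (Kfamily ix) = 2 ^ ((CARD('n) - 1) * (CARD('n) - 2) div 2)" .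
  have b: "\<forall>\<Gamma>\<in>Kfamily ix. bieberbach \<Gamma>"
    using Gp_bieberbach by (auto simp: Kfamily_def)
  show ?thesis using c b noniso by blast
qed


end
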